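(* Let $\mathbb{F}$ be a field, $\sigma=\mathrm{Id}$, and $\delta$ a derivation of $\mathbb{F}$ with field of constants $K=\{\beta\in\mathbb{F}:\delta(\beta)=0\}$, and assume $\dim_K(\mathbb{F})<\infty$. A vector $(a_1,\dots,a_r)\in\mathbb{F}^r$ is a $(\sigma,\delta)$-multiplicity sequence if and only if for each $i=1,\dots,r-1$ there exists $\beta_i\in\mathbb{F}^*$ with $$a_{i+1}-a_i=\delta(\beta_i)\beta_i^{-1}\quad\text{and}\quad\beta_i\notin\delta(\mathbb{F}).$$
   Context: $\mathbb{F}[x;\mathrm{Id},\delta]$ is the differential polynomial ring with $xa=ax+\delta(a)$. For $\mathbf a=(a_1,\dots,a_r)$, $P_{\mathbf a}=(x-a_r)\cdots(x-a_1)$; $\mathbf a$ is a $(\sigma,\delta)$-multiplicity sequence if $a_1$ is the only $b\in\mathbb{F}$ such that $x-b$ divides $P_{\mathbf a}$ on the right. *)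

theory Defs
  imports "HOL-Computational_Algebra.Polynomial"
begin

definition derivation :: "('a::field \<Rightarrow> 'a) \<Rightarrow> bool" where
  "derivation \<delta> \<longleftrightarrow> (\<forall>x y. \<delta> (x + y) = \<delta> x + \<delta> y) \<and>
                    (\<forall>x y. \<delta> (x * y) = \<delta> x * y + x * \<delta> y)"

definition fin_dim_over_constants :: "('a::field \<Rightarrow> 'a) \<Rightarrow> bool" where
  "fin_dim_over_constants \<delta> \<longleftrightarrow>
     (\<exists>B. finite B \<and> (\<forall>x. \<exists>c. (\<forall>b\<in>B. \<delta> (c b) = 0) \<and> x = (\<Sum>b\<in>B. c b * b)))"

text \<open>Elements of F[x;Id,delta] are represented by polynomials sum c_i x^i (coefficients
  on the left).  Left multiplication by x: x * (sum d_j x^j) = sum (d_j x^(j+1) + delta(d_j) x^j).\<close>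
definition dlmul_x :: "('a::field \<Rightarrow> 'a) \<Rightarrow> 'a poly \<Rightarrow> 'a poly" where
  "dlmul_x \<delta> p = pCons 0 p + map_poly \<delta> p"

definition dmult :: "('a::field \<Rightarrow> 'a) \<Rightarrow> 'a poly \<Rightarrow> 'a poly \<Rightarrow> 'a poly" where
  "dmult \<delta> p q = (\<Sum>i\<le>degree p. smult (coeff p i) ((dlmul_x \<delta> ^^ i) q))"

text \<open>P_a = (x - a_r) ... (x - a_1) for a = [a_1, ..., a_r].\<close>
definition P_seq :: "('a::field \<Rightarrow> 'a) \<Rightarrow> 'a list \<Rightarrow> 'a poly" where
  "P_seq \<delta> as = foldl (\<lambda>p a. dmult \<delta> [:- a, 1:] p) 1 as"

definition right_divides :: "('a::field \<Rightarrow> 'a) \<Rightarrow> 'a poly \<Rightarrow> 'a poly \<Rightarrow> bool" where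
  "right_divides \<delta> d p \<longleftrightarrow> (\<exists>q. p = dmult \<delta> q d)"

definition mult_seq :: "('a::field \<Rightarrow> 'a) \<Rightarrow> 'a list \<Rightarrow> bool" where
  "mult_seq \<delta> as \<longleftrightarrow> as \<noteq> [] \<and>
     (\<forall>b. right_divides \<delta> [:- b, 1:] (P_seq \<delta> as) \<longleftrightarrow> b = hd as)"

end

theory Submission
  imports Defs "Jordan_Normal_Form.Missing_VectorSpace"
begin


definition KR :: "'a::field set \<Rightarrow> 'a ring" where
  "KR Kc = \<lparr>carrier = Kc, monoid.mult = (*), one = 1, zero = 0, add = (+)\<rparr>"
definition VM :: "'a::field set \<Rightarrow> ('a,'a) module" where
  "VM Kc = \<lparr>carrier = UNIV, monoid.mult = (*), one = 1, zero = 0, add = (+), smult = (*)\<rparr>"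

locale subf =
  fixes Kc :: "'a::field set"
  assumes z: "0 \<in> Kc" and o: "1 \<in> Kc" and ad: "x \<in> Kc \<Longrightarrow> y \<in> Kc \<Longrightarrow> x + y \<in> Kc"
   and mu: "x \<in> Kc \<Longrightarrow> y \<in> Kc \<Longrightarrow> x * y \<in> Kc" and ne: "x \<in> Kc \<Longrightarrow> - x \<in> Kc"
   and iv: "x \<in> Kc \<Longrightarrow> inverse x \<in> Kc"
begin

lemma field_KR: "field (KR Kc)"
proof -
  have a: "\<exists>y\<in>Kc. x + y = 0" if "x \<in> Kc" for x using ne[OF that] by (intro bexI[of _ "-x"]) auto
  have b: "\<exists>y\<in>Kc. x * y = 1" if "x \<in> Kc" "x \<noteq> 0" for x using iv[OF that(1)] that by (intro bexI[of _ "inverse x"]) auto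
  show ?thesis
    unfolding KR_def using a b z o ad mu
    apply unfold_locales 
    apply (auto simp:algebra_simps Units_def)
    done
qed

lemma vs: "vectorspace (KR Kc) (VM Kc)"
proof -
  have ag: "abelian_group (VM Kc)"
    unfolding VM_def
    apply unfold_locales
    apply (auto simp: algebra_simps Units_def)
    by (metis add.commute add.right_inverse)
  have "module (KR Kc) (VM Kc)"
    apply (rule moduleI)
    using field_KR ag apply (auto simp: field.axioms domain.axioms)[2]
    by (auto simp: KR_def VM_def algebra_simps)
  then show ?thesis using field_KR by (simp add: vectorspace_def)
qed


lemma VM_simps[simp]: "carrier (VM Kc) = UNIV" "add (VM Kc) = (+)" "zero (VM Kc) = 0" "Module.module.smult (VM Kc) = (*)"
  "carrier (KR Kc) = Kc" "add (KR Kc) = (+)" "zero (KR Kc) = 0" "monoid.mult (KR Kc) = (*)" "one (KR Kc) = 1"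
  by (auto simp: VM_def KR_def)

lemma finsum_VM: "finite A \<Longrightarrow> finsum (VM Kc) f A = (\<Sum>v\<in>A. f v)"
proof (induction A rule: finite_induct)
  case empty
  interpret V: vectorspace "KR Kc" "VM Kc" by (rule vs)
  show ?case by simp
next
  case (insert x F)
  interpret V: vectorspace "KR Kc" "VM Kc" by (rule vs)
  show ?case using insert by (simp add: V.M.finsum_insert)
qed

lemma lincomb_VM: "finite A \<Longrightarrow> module.lincomb (VM Kc) a A = (\<Sum>v\<in>A. a v * v)"
proof -
  assume "finite A"
  interpret V: vectorspace "KR Kc" "VM Kc" by (rule vs)
  show ?thesis unfolding V.lincomb_def using finsum_VM[OF \<open>finite A\<close>] by simp
qed

lemma span_VM: "module.span (KR Kc) (VM Kc) S = {(\<Sum>v\<in>A. a v * v) | a A. finite A \<and> A \<subseteq> S \<and> (\<forall>v\<in>A. a v \<in> Kc)}"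
proof -
  interpret V: vectorspace "KR Kc" "VM Kc" by (rule vs)
  show ?thesis unfolding V.span_def using lincomb_VM by (auto simp: Pi_def) metis+
qed


lemma lin_main:
  fixes L :: "'a \<Rightarrow> 'a"
  assumes fB: "finite B" and spB: "\<forall>x. \<exists>c. (\<forall>b\<in>B. c b \<in> Kc) \<and> x = (\<Sum>b\<in>B. c b * b)"
    and Ladd: "\<forall>x y. L (x+y) = L x + L y" and Lsm: "\<forall>k\<in>Kc. \<forall>x. L (k*x) = k * L x"
  shows "(inj L \<longrightarrow> surj L) \<and> ({x. L x = 0} = Kc \<longrightarrow> (\<forall>\<beta> y. \<beta> \<notin> range L \<longrightarrow> (\<exists>k\<in>Kc. y - k*\<beta> \<in> range L)))"
proof -
  interpret V: vectorspace "KR Kc" "VM Kc" by (rule vs)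
  have fd: V.fin_dim
    unfolding V.fin_dim_def
  proof (intro exI[of _ B] conjI)
    have "\<exists>a A. x = (\<Sum>v\<in>A. a v * v) \<and> finite A \<and> A \<subseteq> B \<and> (\<forall>v\<in>A. a v \<in> Kc)" for x
    proof -
      obtain c where "\<forall>b\<in>B. c b \<in> Kc" "x = (\<Sum>b\<in>B. c b * b)" using spB by blast
      then show ?thesis using fB by blast
    qed
    then show "V.gen_set B" unfolding span_VM by auto
  qed (use fB in auto)
  have hom: "L \<in> module_hom (KR Kc) (VM Kc) (VM Kc)"
    unfolding module_hom_def using Ladd Lsm by auto
  interpret LV: linear_map "KR Kc" "VM Kc" "VM Kc" L
    by (intro linear_map.intro mod_hom.intro mod_hom_axioms.intro) (auto intro: vs hom V.module_axioms)
  have imeq: "LV.im = range L" unfolding LV.im_def by simp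
  have subim: "subspace (KR Kc) (range L) (VM Kc)" using LV.imT_is_subspace imeq by simp
  interpret W: vectorspace "KR Kc" "V.vs (range L)" using V.subspace_is_vs[OF subim] .
  have homW: "L \<in> module_hom (KR Kc) (VM Kc) (V.vs (range L))"
    unfolding module_hom_def using Ladd Lsm by auto
  interpret LW: linear_map "KR Kc" "VM Kc" "V.vs (range L)" L
    by (intro linear_map.intro mod_hom.intro mod_hom_axioms.intro) (auto intro: vs homW V.module_axioms W.module_axioms W.vectorspace_axioms)
  have imW: "LW.im = range L" unfolding LW.im_def by simp
  have Wfd: W.fin_dim using LW.rank_nullity_main(2)[OF fd] by simp
  have rn: "W.dim + vectorspace.dim (KR Kc) ((VM Kc)\<lparr>carrier := {x. L x = 0}\<rparr>) = V.dim"
    using LW.rank_nullity[OF fd] imW unfolding LW.ker_def by simp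
  obtain C where fC: "finite C" and bC: "W.basis C" using W.finite_basis_exists[OF Wfd] by blast
  have cC: "card C = W.dim" using W.dim_basis[OF fC bC] by simp
  have Cim: "C \<subseteq> range L" using bC unfolding W.basis_def by simp
  have submod: "submodule (KR Kc) (range L) (VM Kc)" using subim by (simp add: subspace_def)
  have liC: "\<not> V.lin_dep C" using bC V.span_li_not_depend(2)[OF Cim submod] unfolding W.basis_def by simp
  have spC: "V.span C = range L" using bC V.span_li_not_depend(1)[OF Cim submod] unfolding W.basis_def by simp
  have P1: "inj L \<longrightarrow> surj L"
  proof
    assume "inj L"
    have "vectorspace.dim (KR Kc) ((VM Kc)\<lparr>carrier := {x. L x = 0}\<rparr>) = 0"
      using LW.inj_imp_dim_ker0 \<open>inj L\<close> unfolding LW.ker_def by (simp add: inj_on_def)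
    with rn cC have "card C = V.dim" by simp
    then have "V.basis C" using V.dim_li_is_basis[OF fd fC _ liC] by simp
    then show "surj L" using spC unfolding V.basis_def by simp
  qed
  have P2: "{x. L x = 0} = Kc \<longrightarrow> (\<forall>\<beta> y. \<beta> \<notin> range L \<longrightarrow> (\<exists>k\<in>Kc. y - k*\<beta> \<in> range L))"
  proof (intro impI allI)
    fix \<beta> y
    assume ker: "{x. L x = 0} = Kc" and nb: "\<beta> \<notin> range L"
    have subK: "subspace (KR Kc) Kc (VM Kc)" using LV.kerT_is_subspace ker unfolding LV.ker_def by simp
    interpret KV: vectorspace "KR Kc" "V.vs Kc" using V.subspace_is_vs[OF subK] .
    have sp1: "V.span {1} = Kc"
      unfolding span_VM
    proof (safe)
      fix a and A :: "'a set" assume "finite A" "A \<subseteq> {1}" "\<forall>v\<in>A. a v \<in> Kc"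
      then show "(\<Sum>v\<in>A. a v * v) \<in> Kc" using z by (cases "A = {}") (auto dest: subset_singletonD)
    next
      fix k assume "k \<in> Kc"
      then show "\<exists>a (A::'a set). k = (\<Sum>v\<in>A. a v * v) \<and> finite A \<and> A \<subseteq> {1} \<and> (\<forall>v\<in>A. a v \<in> Kc)"
        by (intro exI[of _ "\<lambda>_. k"] exI[of _ "{1}"]) auto
    qed
    have "KV.gen_set {1}"
      using V.span_li_not_depend(1)[of "{1}" Kc] subK o sp1 by (simp add: subspace_def)
    then have "KV.dim = 1" using KV.dim1I o by simp
    with rn cC ker have cd: "card C + 1 = V.dim" by simp
    have bC': "\<beta> \<notin> C" using Cim nb by auto
    have "\<not> V.lin_dep (C \<union> {\<beta>})"
      using V.lin_dep_iff_in_span[of C \<beta>] liC bC' nb spC by simp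
    moreover have "card (C \<union> {\<beta>}) = V.dim" using cd bC' fC by simp
    ultimately have "V.basis (C \<union> {\<beta>})" using V.dim_li_is_basis[OF fd] fC by simp
    then have "y \<in> V.span (C \<union> {\<beta>})" unfolding V.basis_def by simp
    then obtain a A where fA: "finite A" and AC: "A \<subseteq> C \<union> {\<beta>}" and aK: "\<forall>v\<in>A. a v \<in> Kc"
       and y: "y = (\<Sum>v\<in>A. a v * v)"
      unfolding span_VM by blast
    define k where "k = (if \<beta> \<in> A then a \<beta> else 0)"
    have "y - k * \<beta> = (\<Sum>v\<in>A - {\<beta>}. a v * v)"
      unfolding y k_def using fA by (simp add: sum.remove)
    also have "\<dots> \<in> V.span C" unfolding span_VM using fA AC aK by blast
    finally have "y - k * \<beta> \<in> range L" using spC by simp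
    moreover have "k \<in> Kc" using aK z by (auto simp: k_def)
    ultimately show "\<exists>k\<in>Kc. y - k*\<beta> \<in> range L" by blast
  qed
  show ?thesis using P1 P2 by blast
qed

end


locale der0 =
  fixes \<delta> :: "'a::field \<Rightarrow> 'a"
  assumes der: "derivation \<delta>"
begin

lemma dadd: "\<delta> (x + y) = \<delta> x + \<delta> y" using der unfolding derivation_def by blast
lemma dmul: "\<delta> (x * y) = \<delta> x * y + x * \<delta> y" using der unfolding derivation_def by blast
lemma d0[simp]: "\<delta> 0 = 0" using dadd[of 0 0] by (metis add_cancel_right_right add_0)
lemma d1[simp]: "\<delta> 1 = 0" using dmul[of 1 1] by (metis add_cancel_right_right mult_1 mult_1_right)
lemma dneg: "\<delta> (- x) = - \<delta> x" using dadd[of x "-x"] by (simp add: eq_neg_iff_add_eq_0 add.commute)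
lemma dminus: "\<delta> (x - y) = \<delta> x - \<delta> y" using dadd[of x "-y"] dneg[of y] by simp
lemma dsum: "\<delta> (sum f A) = sum (\<lambda>i. \<delta> (f i)) A"
  by (induction A rule: infinite_finite_induct) (auto simp: dadd)
lemma dinv: "x \<noteq> 0 \<Longrightarrow> \<delta> (inverse x) = - \<delta> x * inverse x * inverse x"
proof -
  assume x: "x \<noteq> 0"
  have "\<delta> (x * inverse x) = 0" using x by simp
  then have "\<delta> x * inverse x + x * \<delta> (inverse x) = 0" by (simp add: dmul)
  then have h: "x * \<delta> (inverse x) = - (\<delta> x * inverse x)" by (simp add: eq_neg_iff_add_eq_0 add.commute)
  have "\<delta> (inverse x) = inverse x * (x * \<delta> (inverse x))" using x by simp
  also have "\<dots> = inverse x * (- (\<delta> x * inverse x))" using h by simp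
  finally show ?thesis by (simp add: algebra_simps)
qed
lemma ddiv: "y \<noteq> 0 \<Longrightarrow> \<delta> (x / y) = (\<delta> x * y - x * \<delta> y) / (y * y)"
proof -
  assume y: "y \<noteq> 0"
  have "\<delta> (x / y) = \<delta> x * inverse y + x * (- \<delta> y * inverse y * inverse y)"
    using y by (simp add: divide_inverse dmul dinv)
  also have "\<dots> = (\<delta> x * y - x * \<delta> y) / (y * y)" using y by (simp add: field_simps)
  finally show ?thesis .
qed

end

locale der = der0 +
  assumes F1: "(\<forall>w. \<delta> w + c * w \<noteq> 1) \<Longrightarrow> \<exists>y. y \<noteq> 0 \<and> \<delta> y + c * y = 0"
    and F2: "\<beta> \<notin> range \<delta> \<Longrightarrow> \<exists>k. \<delta> k = 0 \<and> y - k * \<beta> \<in> range \<delta>"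
begin

definition T :: "'a \<Rightarrow> 'a \<Rightarrow> 'a" where "T b c = \<delta> c + c * b"

lemma T_add: "T b (x + y) = T b x + T b y" by (simp add: T_def dadd algebra_simps)
lemma T_0[simp]: "T b 0 = 0" by (simp add: T_def)
lemma T_mul: "T b (d * u) = d * T b u + \<delta> d * u" by (simp add: T_def dmul algebra_simps)
lemma T_sum: "T b (sum f A) = sum (\<lambda>i. T b (f i)) A"
  by (induction A rule: infinite_finite_induct) (auto simp: T_add)
lemma Tpow_0[simp]: "(T b ^^ i) 0 = 0" by (induction i) auto

definition ev :: "'a \<Rightarrow> 'a poly \<Rightarrow> 'a" where
  "ev b p = (\<Sum>i\<le>degree p. coeff p i * (T b ^^ i) 1)"

lemma ev_bound: "degree p < N \<Longrightarrow> ev b p = (\<Sum>i<N. coeff p i * (T b ^^ i) 1)"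
proof -
  assume "degree p < N"
  then have "{..<N} = {..degree p} \<union> {degree p<..<N}" by auto
  moreover have "(\<Sum>i\<in>{degree p<..<N}. coeff p i * (T b ^^ i) 1) = 0"
    by (intro sum.neutral) (auto simp: coeff_eq_0)
  moreover have "(\<Sum>i\<in>{..degree p} \<union> {degree p<..<N}. coeff p i * (T b ^^ i) 1)
     = (\<Sum>i\<in>{..degree p}. coeff p i * (T b ^^ i) 1) + (\<Sum>i\<in>{degree p<..<N}. coeff p i * (T b ^^ i) 1)"
    by (rule sum.union_disjoint) auto
  ultimately show ?thesis unfolding ev_def by simp
qed

lemma ev_0[simp]: "ev b 0 = 0" by (simp add: ev_def)
lemma degree_map_le: "degree (map_poly \<delta> p) \<le> degree p"
  by (rule degree_le) (auto simp: coeff_map_poly coeff_eq_0)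

lemma ev_add: "ev b (p + q) = ev b p + ev b q"
proof -
  let ?N = "Suc (max (degree p) (degree q))"
  have "degree (p + q) < ?N" using degree_add_le_max[of p q] by simp
  then show ?thesis using ev_bound[of p ?N b] ev_bound[of q ?N b] ev_bound[of "p+q" ?N b]
    by (simp add: sum.distrib algebra_simps)
qed

lemma ev_smult: "ev b (Polynomial.smult c p) = c * ev b p"
proof -
  have "degree (Polynomial.smult c p) < Suc (degree p)" using degree_smult_le[of c p] by simp
  then show ?thesis using ev_bound[of "Polynomial.smult c p" "Suc (degree p)" b] ev_bound[of p "Suc (degree p)" b]
    by (simp add: sum_distrib_left mult.assoc distrib_left)
qed

lemma ev_sum: "ev b (sum f A) = (\<Sum>i\<in>A. ev b (f i))"
  by (induction A rule: infinite_finite_induct) (auto simp: ev_add)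

lemma ev_dlmul: "ev b (dlmul_x \<delta> p) = T b (ev b p)"
proof -
  let ?N = "Suc (Suc (degree p))"
  have d1: "degree (pCons 0 p) < ?N" by (simp add: degree_pCons_le le_imp_less_Suc)
  have d2: "degree (map_poly \<delta> p) < ?N" using degree_map_le[of p] by simp
  have "ev b (pCons 0 p) = (\<Sum>i<?N. coeff (pCons 0 p) i * (T b ^^ i) 1)" using ev_bound[OF d1] .
  also have "\<dots> = (\<Sum>i<Suc (degree p). coeff p i * (T b ^^ Suc i) 1)"
    by (subst sum.lessThan_Suc_shift) simp
  finally have e1: "ev b (pCons 0 p) = (\<Sum>i<Suc (degree p). coeff p i * T b ((T b ^^ i) 1))" by simp
  have "ev b (map_poly \<delta> p) = (\<Sum>i<?N. coeff (map_poly \<delta> p) i * (T b ^^ i) 1)" using ev_bound[OF d2] .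
  also have "\<dots> = (\<Sum>i<Suc (degree p). \<delta> (coeff p i) * (T b ^^ i) 1)"
    by (simp add: coeff_map_poly coeff_eq_0)
  finally have e2: "ev b (map_poly \<delta> p) = (\<Sum>i<Suc (degree p). \<delta> (coeff p i) * (T b ^^ i) 1)" .
  have "T b (ev b p) = (\<Sum>i<Suc (degree p). T b (coeff p i * (T b ^^ i) 1))"
    by (simp only: ev_bound[of p "Suc (degree p)" b, OF lessI] T_sum)
  also have "\<dots> = (\<Sum>i<Suc (degree p). coeff p i * T b ((T b ^^ i) 1) + \<delta> (coeff p i) * (T b ^^ i) 1)"
    by (simp add: T_mul)
  finally show ?thesis unfolding dlmul_x_def ev_add e1 e2 by (simp add: sum.distrib)
qed

lemma ev_dlmul_pow: "ev b ((dlmul_x \<delta> ^^ i) p) = (T b ^^ i) (ev b p)"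
  by (induction i) (auto simp: ev_dlmul)

lemma ev_dmult: "ev b (dmult \<delta> q p) = (\<Sum>i\<le>degree q. coeff q i * (T b ^^ i) (ev b p))"
  unfolding dmult_def ev_sum by (simp add: ev_smult ev_dlmul_pow)


lemma ev_const[simp]: "ev b [:r:] = r" by (simp add: ev_def)

lemma dmult_bound: "degree q < N \<Longrightarrow> dmult \<delta> q p = (\<Sum>i<N. Polynomial.smult (coeff q i) ((dlmul_x \<delta> ^^ i) p))"
proof -
  assume "degree q < N"
  then have "{..<N} = {..degree q} \<union> {degree q<..<N}" by auto
  moreover have "(\<Sum>i\<in>{degree q<..<N}. Polynomial.smult (coeff q i) ((dlmul_x \<delta> ^^ i) p)) = 0"
    by (intro sum.neutral) (auto simp: coeff_eq_0)
  moreover have "(\<Sum>i\<in>{..degree q} \<union> {degree q<..<N}. Polynomial.smult (coeff q i) ((dlmul_x \<delta> ^^ i) p))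
     = (\<Sum>i\<in>{..degree q}. Polynomial.smult (coeff q i) ((dlmul_x \<delta> ^^ i) p)) + (\<Sum>i\<in>{degree q<..<N}. Polynomial.smult (coeff q i) ((dlmul_x \<delta> ^^ i) p))"
    by (rule sum.union_disjoint) auto
  ultimately show ?thesis unfolding dmult_def by simp
qed

lemma dmult_add1: "dmult \<delta> (q1 + q2) p = dmult \<delta> q1 p + dmult \<delta> q2 p"
proof -
  let ?N = "Suc (max (degree q1) (degree q2))"
  have "degree (q1 + q2) < ?N" using degree_add_le_max[of q1 q2] by simp
  then show ?thesis using dmult_bound[of q1 ?N p] dmult_bound[of q2 ?N p] dmult_bound[of "q1+q2" ?N p]
    by (simp add: sum.distrib Polynomial.smult_add_left)
qed

lemma dmult_monom: "dmult \<delta> (monom c n) p = Polynomial.smult c ((dlmul_x \<delta> ^^ n) p)"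
proof -
  have "degree (monom c n) < Suc n" by (simp add: degree_monom_le le_imp_less_Suc)
  then have "dmult \<delta> (monom c n) p = (\<Sum>i<Suc n. Polynomial.smult (coeff (monom c n) i) ((dlmul_x \<delta> ^^ i) p))"
    by (rule dmult_bound)
  also have "\<dots> = Polynomial.smult c ((dlmul_x \<delta> ^^ n) p)"
    by (subst sum.lessThan_Suc) (simp add: sum.neutral)
  finally show ?thesis .
qed

lemma dmult_0[simp]: "dmult \<delta> 0 p = 0" by (simp add: dmult_def)

lemma coeff_dlmul: "coeff (dlmul_x \<delta> p) n = coeff (pCons 0 p) n + \<delta> (coeff p n)"
  by (simp add: dlmul_x_def coeff_map_poly)

lemma dlmul_deg: "p \<noteq> 0 \<Longrightarrow> degree (dlmul_x \<delta> p) = Suc (degree p) \<and> coeff (dlmul_x \<delta> p) (Suc (degree p)) = lead_coeff p"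
proof -
  assume p: "p \<noteq> 0"
  have c: "coeff (dlmul_x \<delta> p) (Suc (degree p)) = lead_coeff p"
    by (simp add: coeff_dlmul coeff_eq_0)
  have "degree (dlmul_x \<delta> p) \<le> Suc (degree p)"
    unfolding dlmul_x_def using degree_map_le[of p] degree_pCons_le[of 0 p]
    by (intro degree_add_le) auto
  moreover have "Suc (degree p) \<le> degree (dlmul_x \<delta> p)" using c p by (intro le_degree) simp
  ultimately show ?thesis using c by simp
qed

lemma dlmul_pow_deg: "degree ((dlmul_x \<delta> ^^ n) [:-b,1:]) = Suc n \<and> lead_coeff ((dlmul_x \<delta> ^^ n) [:-b,1:]) = 1"
proof (induction n)
  case 0 then show ?case by simp
next
  case (Suc n)
  have "(dlmul_x \<delta> ^^ n) [:-b,1:] \<noteq> 0" using Suc by auto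
  from dlmul_deg[OF this] Suc show ?case by (simp, metis)
qed

lemma division: "\<exists>q r. p = dmult \<delta> q [:-b,1:] + [:r:]"
proof (induction "degree p" arbitrary: p rule: less_induct)
  case less
  show ?case
  proof (cases "degree p")
    case 0
    then have "p = dmult \<delta> 0 [:-b,1:] + [:coeff p 0:]" by (simp add: degree_0_id)
    then show ?thesis by blast
  next
    case (Suc n)
    define c where "c = lead_coeff p"
    define p' where "p' = p - Polynomial.smult c ((dlmul_x \<delta> ^^ n) [:-b,1:])"
    have dd: "degree ((dlmul_x \<delta> ^^ n) [:-b,1:]) = Suc n" "coeff ((dlmul_x \<delta> ^^ n) [:-b,1:]) (Suc n) = 1"
      using dlmul_pow_deg[of n b] by auto
    have "degree p' \<le> n"
    proof (rule degree_le, intro allI impI)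
      fix i assume "n < i"
      show "coeff p' i = 0"
      proof (cases "i = Suc n")
        case True then show ?thesis using Suc dd by (simp add: p'_def c_def)
      next
        case False
        then have "i > Suc n" using \<open>n < i\<close> by simp
        then show ?thesis using Suc dd by (simp add: p'_def coeff_eq_0)
      qed
    qed
    then have "degree p' < degree p" using Suc by simp
    then obtain q r where qr: "p' = dmult \<delta> q [:-b,1:] + [:r:]" using less by blast
    have "p = p' + Polynomial.smult c ((dlmul_x \<delta> ^^ n) [:-b,1:])" by (simp add: p'_def)
    also have "\<dots> = dmult \<delta> (q + monom c n) [:-b,1:] + [:r:]"
      by (simp add: qr dmult_add1 dmult_monom)
    finally show ?thesis by blast
  qed
qed

lemma ev_lin: "ev b [:-b,1:] = 0" by (simp add: ev_def T_def)

lemma rd_iff: "right_divides \<delta> [:-b,1:] p \<longleftrightarrow> ev b p = 0"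
proof
  assume "right_divides \<delta> [:-b,1:] p"
  then obtain q where "p = dmult \<delta> q [:-b,1:]" unfolding right_divides_def by blast
  then show "ev b p = 0" by (simp add: ev_dmult ev_lin)
next
  assume e: "ev b p = 0"
  obtain q r where qr: "p = dmult \<delta> q [:-b,1:] + [:r:]" using division by blast
  then have "ev b p = r" by (simp add: ev_add ev_dmult ev_lin)
  then show "right_divides \<delta> [:-b,1:] p" using e qr unfolding right_divides_def by auto
qed

definition Ef :: "'a \<Rightarrow> 'a list \<Rightarrow> 'a" where
  "Ef b as = foldl (\<lambda>u a. \<delta> u + u * b - a * u) 1 as"

lemma Ef_snoc: "Ef b (as @ [a]) = \<delta> (Ef b as) + Ef b as * b - a * Ef b as"
  by (simp add: Ef_def)

lemma ev_P: "ev b (P_seq \<delta> as) = Ef b as"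
proof (induction as rule: rev_induct)
  case Nil then show ?case by (simp add: P_seq_def Ef_def ev_def)
next
  case (snoc a as)
  have "P_seq \<delta> (as @ [a]) = dmult \<delta> [:-a,1:] (P_seq \<delta> as)" by (simp add: P_seq_def)
  then have "ev b (P_seq \<delta> (as @ [a])) = - a * ev b (P_seq \<delta> as) + T b (ev b (P_seq \<delta> as))"
    by (simp add: ev_dmult)
  then show ?case using snoc by (simp add: Ef_snoc T_def algebra_simps)
qed


definition lg :: "'a \<Rightarrow> 'a" where "lg u = \<delta> u * inverse u"
definition Gs :: "'a \<Rightarrow> bool" where "Gs c \<longleftrightarrow> (\<exists>\<gamma>. \<gamma> \<noteq> 0 \<and> c = \<gamma> + lg \<gamma>)"
definition Lp :: "'a \<Rightarrow> bool" where "Lp c \<longleftrightarrow> (\<exists>\<beta>. \<beta> \<noteq> 0 \<and> c = \<delta> \<beta> * inverse \<beta> \<and> \<beta> \<notin> range \<delta>)"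

lemma lg_mult: "x \<noteq> 0 \<Longrightarrow> y \<noteq> 0 \<Longrightarrow> lg (x * y) = lg x + lg y"
  by (simp add: lg_def dmul field_simps)
lemma lg_inv: "x \<noteq> 0 \<Longrightarrow> lg (inverse x) = - lg x"
proof -
  assume x: "x \<noteq> 0"
  show ?thesis unfolding lg_def dinv[OF x] using x by (simp add: field_simps)
qed
lemma lg_div: "x \<noteq> 0 \<Longrightarrow> y \<noteq> 0 \<Longrightarrow> lg (x / y) = lg x - lg y"
  by (simp add: divide_inverse lg_mult lg_inv)
lemma d_lg: "x \<noteq> 0 \<Longrightarrow> \<delta> x = lg x * x"
  by (simp add: lg_def)

lemma GofD: "\<beta> = \<delta> \<eta> \<Longrightarrow> \<beta> \<noteq> 0 \<Longrightarrow> Gs (lg \<beta>)"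
proof -
  assume b: "\<beta> = \<delta> \<eta>" "\<beta> \<noteq> 0"
  then have e: "\<eta> \<noteq> 0" by auto
  define \<gamma> where "\<gamma> = \<beta> / \<eta>"
  have g: "\<gamma> \<noteq> 0" using b e by (simp add: \<gamma>_def)
  have "lg \<gamma> = lg \<beta> - lg \<eta>" using b e by (simp add: \<gamma>_def lg_div)
  moreover have "lg \<eta> = \<gamma>" using b by (simp add: lg_def \<gamma>_def divide_inverse)
  ultimately have "lg \<beta> = \<gamma> + lg \<gamma>" by simp
  then show ?thesis using g unfolding Gs_def by blast
qed

lemma dis: "Gs c \<Longrightarrow> Lp c \<Longrightarrow> False"
proof -
  assume "Gs c" "Lp c"
  then obtain \<gamma> \<beta> where g: "\<gamma> \<noteq> 0" "c = \<gamma> + lg \<gamma>" and b: "\<beta> \<noteq> 0" "c = lg \<beta>" "\<beta> \<notin> range \<delta>"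
    unfolding Gs_def Lp_def lg_def by blast
  define \<eta> where "\<eta> = \<beta> / \<gamma>"
  have e: "\<eta> \<noteq> 0" using g b by (simp add: \<eta>_def)
  have "lg \<eta> = \<gamma>" using g b by (simp add: \<eta>_def lg_div)
  then have "\<delta> \<eta> = \<beta>" using d_lg[OF e] g by (simp add: \<eta>_def)
  then show False using b by (metis rangeI)
qed

lemma cover: "Gs c \<or> Lp c"
proof (cases "\<exists>w. \<delta> w + c * w = 1")
  case True
  then obtain w where w: "\<delta> w + c * w = 1" by blast
  then have w0: "w \<noteq> 0" by auto
  have "inverse w + lg (inverse w) = c"
  proof -
    have "lg (inverse w) = - lg w" by (rule lg_inv[OF w0])
    also have "\<dots> = - (\<delta> w * inverse w)" by (simp add: lg_def)
    finally have "lg (inverse w) = - (\<delta> w * inverse w)" .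
    moreover have "\<delta> w = 1 - c * w" using w by (simp add: algebra_simps)
    ultimately show ?thesis using w0 by (simp add: field_simps)
  qed
  then have "Gs c" unfolding Gs_def using w0 by (metis inverse_nonzero_iff_nonzero)
  then show ?thesis by simp
next
  case False
  then obtain y where y: "y \<noteq> 0" "\<delta> y + c * y = 0" using F1 by blast
  define \<beta> where "\<beta> = inverse y"
  have b0: "\<beta> \<noteq> 0" using y by (simp add: \<beta>_def)
  have "lg \<beta> = c"
  proof -
    have "lg \<beta> = - lg y" using y by (simp add: \<beta>_def lg_inv)
    moreover have "\<delta> y = - c * y" using y by (simp add: eq_neg_iff_add_eq_0)
    ultimately show ?thesis using y by (simp add: lg_def)
  qed
  show ?thesis
  proof (cases "\<beta> \<in> range \<delta>")
    case True
    then show ?thesis using GofD b0 \<open>lg \<beta> = c\<close> by auto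
  next
    case False
    then show ?thesis using b0 \<open>lg \<beta> = c\<close> unfolding Lp_def lg_def by blast
  qed
qed

lemma lemB: "Lp d \<Longrightarrow> Gs c \<Longrightarrow> \<exists>h. h \<noteq> 0 \<and> Gs (h + d) \<and> c = h + lg h"
proof -
  assume Ld: "Lp d" and Gc: "Gs c"
  obtain \<gamma>0 where g0: "\<gamma>0 \<noteq> 0" "c = \<gamma>0 + lg \<gamma>0" using Gc unfolding Gs_def by blast
  show ?thesis
  proof (cases "Gs (\<gamma>0 + d)")
    case True then show ?thesis using g0 by blast
  next
    case False
    then have "Lp (\<gamma>0 + d)" using cover by blast
    then obtain \<beta> where b: "\<beta> \<noteq> 0" "\<gamma>0 + d = lg \<beta>" unfolding Lp_def lg_def by blast
    obtain \<beta>0 where b0: "\<beta>0 \<noteq> 0" "d = lg \<beta>0" "\<beta>0 \<notin> range \<delta>" using Ld unfolding Lp_def lg_def by blast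
    define \<mu> where "\<mu> = \<beta> / \<beta>0"
    have mu0: "\<mu> \<noteq> 0" using b b0 by (simp add: \<mu>_def)
    have lmu: "lg \<mu> = \<gamma>0" using b b0 by (simp add: \<mu>_def lg_div algebra_simps)
    define m where "m = \<delta> \<mu>"
    have m: "m = \<gamma>0 * \<mu>" using d_lg[OF mu0] lmu by (simp add: m_def)
    have m0: "m \<noteq> 0" using m g0 mu0 by simp
    obtain k where k: "\<delta> k = 0" "\<mu> * \<beta>0 - k * \<beta>0 \<in> range \<delta>" using F2[OF b0(3)] by blast
    define \<nu> where "\<nu> = \<mu> - k"
    have dnu: "\<delta> \<nu> = m" using k by (simp add: \<nu>_def dminus m_def)
    have nu0: "\<nu> \<noteq> 0" using dnu m0 by auto
    define h where "h = lg \<nu>"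
    have h: "h = m / \<nu>" using dnu by (simp add: h_def lg_def divide_inverse)
    have h0: "h \<noteq> 0" using h m0 nu0 by simp
    define D2 where "D2 = \<delta> m"
    have "c = D2 / m"
    proof -
      have gm: "\<gamma>0 = m / \<mu>" using m mu0 by simp
      have dg: "\<delta> \<gamma>0 = (D2 * \<mu> - m * m) / (\<mu> * \<mu>)"
        unfolding gm using mu0 ddiv[of \<mu> m] by (simp add: D2_def m_def)
      have L: "lg \<gamma>0 = \<delta> \<gamma>0 / \<gamma>0" by (simp add: lg_def divide_inverse)
      have "c = m / \<mu> + ((D2 * \<mu> - m * m) / (\<mu> * \<mu>)) / (m / \<mu>)"
        using g0(2) L dg gm by simp
      then show ?thesis using mu0 m0 by (simp add: field_simps)
    qed
    moreover have "h + lg h = D2 / m"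
    proof -
      have dh: "\<delta> h = (D2 * \<nu> - m * m) / (\<nu> * \<nu>)"
        unfolding h using nu0 ddiv[of \<nu> m] dnu by (simp add: D2_def)
      have L: "lg h = \<delta> h / h" by (simp add: lg_def divide_inverse)
      have "h + lg h = m / \<nu> + ((D2 * \<nu> - m * m) / (\<nu> * \<nu>)) / (m / \<nu>)"
        using L dh h by simp
      then show ?thesis using nu0 m0 by (simp add: field_simps)
    qed
    ultimately have ch: "c = h + lg h" by simp
    have "h + d = lg (\<nu> * \<beta>0)" using nu0 b0 by (simp add: h_def lg_mult)
    moreover have "\<nu> * \<beta>0 \<in> range \<delta>" using k by (simp add: \<nu>_def algebra_simps)
    moreover have "\<nu> * \<beta>0 \<noteq> 0" using nu0 b0 by simp
    ultimately have "Gs (h + d)" using GofD by (metis image_iff no_zero_divisors)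
    then show ?thesis using h0 ch by blast
  qed
qed


definition Cond :: "'a list \<Rightarrow> bool" where
  "Cond as \<longleftrightarrow> (\<forall>i. i + 1 < length as \<longrightarrow> Lp (as ! (i + 1) - as ! i))"

lemma Cond_snoc: "as \<noteq> [] \<Longrightarrow> Cond (as @ [a]) \<longleftrightarrow> Cond as \<and> Lp (a - last as)"
proof -
  assume ne: "as \<noteq> []"
  have l: "last as = as ! (length as - 1)" using ne by (simp add: last_conv_nth)
  show ?thesis
  proof
    assume c: "Cond (as @ [a])"
    have "Cond as" unfolding Cond_def
    proof (intro allI impI)
      fix i assume "i + 1 < length as"
      then show "Lp (as ! (i + 1) - as ! i)" using c[unfolded Cond_def, rule_format, of i]
        by (simp add: nth_append)
    qed
    moreover have "Lp (a - last as)" using c[unfolded Cond_def, rule_format, of "length as - 1"] ne l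
      by (simp add: nth_append)
    ultimately show "Cond as \<and> Lp (a - last as)" by simp
  next
    assume c: "Cond as \<and> Lp (a - last as)"
    show "Cond (as @ [a])" unfolding Cond_def
    proof (intro allI impI)
      fix i assume i: "i + 1 < length (as @ [a])"
      show "Lp ((as @ [a]) ! (i + 1) - (as @ [a]) ! i)"
      proof (cases "i + 1 < length as")
        case True then show ?thesis using c unfolding Cond_def by (simp add: nth_append)
      next
        case False
        then have i1: "i + 1 = length as" using i by simp
        then have i2: "i = length as - 1" by simp
        have "(as @ [a]) ! (i + 1) = a" using i1 by (simp add: nth_append)
        moreover have "(as @ [a]) ! i = last as" using i1 i2 l by (simp add: nth_append)
        ultimately show ?thesis using c by simp
      qed
    qed
  qed
qed

lemma Ef_single: "Ef b [a] = b - a" by (simp add: Ef_def)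

lemma foldl_zero: "foldl (\<lambda>u a. \<delta> u + u * b - a * u) 0 bs = 0"
  by (induction bs) auto

lemma Ef_app: "Ef b as = 0 \<Longrightarrow> Ef b (as @ bs) = 0"
  unfolding Ef_def by (simp add: foldl_zero)

lemma Ef_hd: "as \<noteq> [] \<Longrightarrow> Ef (hd as) as = 0"
proof -
  assume "as \<noteq> []"
  then obtain a rest where "as = [a] @ rest" by (cases as) auto
  then show ?thesis using Ef_app[of a "[a]" rest] by (simp add: Ef_single)
qed

lemma Ef_snoc_fact: "Ef b as \<noteq> 0 \<Longrightarrow> Ef b (as @ [a]) = Ef b as * (b + lg (Ef b as) - a)"
  by (simp add: Ef_snoc lg_def algebra_simps)

lemma Kmain: "as \<noteq> [] \<Longrightarrow> Cond as \<Longrightarrow>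
   (\<forall>b. b \<noteq> hd as \<longrightarrow> Ef b as \<noteq> 0 \<and> Gs (b + lg (Ef b as) - last as)) \<and>
   (\<forall>g. Gs g \<longrightarrow> (\<exists>b. b \<noteq> hd as \<and> b + lg (Ef b as) = last as + g))"
proof (induction as rule: rev_induct)
  case Nil then show ?case by simp
next
  case (snoc a as)
  show ?case
  proof (cases "as = []")
    case True
    have P1: "Ef b [a] \<noteq> 0 \<and> Gs (b + lg (Ef b [a]) - a)" if "b \<noteq> a" for b
      using that unfolding Ef_single Gs_def by (intro conjI exI[of _ "b - a"]) auto
    have P2: "\<exists>b. b \<noteq> a \<and> b + lg (Ef b [a]) = a + g" if "Gs g" for g
    proof -
      obtain \<gamma> where "\<gamma> \<noteq> 0" "g = \<gamma> + lg \<gamma>" using \<open>Gs g\<close> unfolding Gs_def by blast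
      then show ?thesis by (intro exI[of _ "a + \<gamma>"]) (simp add: Ef_single)
    qed
    show ?thesis using True P1 P2 by simp
  next
    case False
    have c: "Cond as" and La: "Lp (a - last as)" using snoc.prems Cond_snoc[OF False] by auto
    note IH = snoc.IH[OF False c]
    have hd: "hd (as @ [a]) = hd as" using False by simp
    have P1: "Ef b (as @ [a]) \<noteq> 0 \<and> Gs (b + lg (Ef b (as @ [a])) - a)" if b: "b \<noteq> hd as" for b
    proof -
      define u where "u = Ef b as"
      have u0: "u \<noteq> 0" and Gu: "Gs (b + lg u - last as)" using IH b by (auto simp: u_def)
      have ne: "b + lg u - a \<noteq> 0"
      proof
        assume "b + lg u - a = 0"
        then have "b + lg u - last as = a - last as" by (simp add: algebra_simps)
        then show False using dis Gu La by metis
      qed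
      have e: "Ef b (as @ [a]) = u * (b + lg u - a)" using Ef_snoc_fact u0 by (simp add: u_def)
      have "b + lg (Ef b (as @ [a])) - a = (b + lg u - a) + lg (b + lg u - a)"
        unfolding e using u0 ne by (simp add: lg_mult)
      then have "Gs (b + lg (Ef b (as @ [a])) - a)" unfolding Gs_def using ne by metis
      then show ?thesis using e u0 ne by simp
    qed
    have P2: "\<exists>b. b \<noteq> hd as \<and> b + lg (Ef b (as @ [a])) = a + g" if "Gs g" for g
    proof -
      obtain h where h: "h \<noteq> 0" "Gs (h + (a - last as))" "g = h + lg h" using lemB[OF La \<open>Gs g\<close>] by blast
      obtain b where b: "b \<noteq> hd as" "b + lg (Ef b as) = last as + (h + (a - last as))"
        using IH h(2) by blast
      define u where "u = Ef b as"
      have u0: "u \<noteq> 0" using IH b by (auto simp: u_def)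
      have hh: "b + lg u - a = h" using b by (simp add: u_def algebra_simps)
      have e: "Ef b (as @ [a]) = u * h" using Ef_snoc_fact u0 hh by (simp add: u_def)
      have "b + lg (Ef b (as @ [a])) = a + g"
        unfolding e using u0 h hh by (simp add: lg_mult algebra_simps)
      then show ?thesis using b by blast
    qed
    show ?thesis using P1 P2 hd by simp
  qed
qed

lemma msq_iff: "as \<noteq> [] \<Longrightarrow> mult_seq \<delta> as \<longleftrightarrow> (\<forall>b. b \<noteq> hd as \<longrightarrow> Ef b as \<noteq> 0)"
  unfolding mult_seq_def rd_iff ev_P using Ef_hd by auto

lemma main_iff: "as \<noteq> [] \<Longrightarrow> mult_seq \<delta> as \<longleftrightarrow> Cond as"
proof -
  assume ne: "as \<noteq> []"
  have "(\<forall>b. b \<noteq> hd as \<longrightarrow> Ef b as \<noteq> 0) \<Longrightarrow> Cond as" using ne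
  proof (induction as rule: rev_induct)
    case Nil then show ?case by simp
  next
    case (snoc a as)
    show ?case
    proof (cases "as = []")
      case True then show ?thesis by (simp add: Cond_def)
    next
      case False
      have hd: "hd (as @ [a]) = hd as" using False by simp
      have nz: "\<forall>b. b \<noteq> hd as \<longrightarrow> Ef b as \<noteq> 0" using snoc.prems hd Ef_app by metis
      have c: "Cond as" using snoc.IH[OF nz False] .
      have "Lp (a - last as)"
      proof (rule ccontr)
        assume "\<not> Lp (a - last as)"
        then have "Gs (a - last as)" using cover by blast
        then obtain b where b: "b \<noteq> hd as" "b + lg (Ef b as) = last as + (a - last as)"
          using Kmain[OF False c] by blast
        have u0: "Ef b as \<noteq> 0" using nz b by blast
        have "Ef b (as @ [a]) = 0" using Ef_snoc_fact[OF u0] b by simp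
        then show False using snoc.prems hd b by metis
      qed
      then show ?thesis using c Cond_snoc[OF False] by simp
    qed
  qed
  moreover have "Cond as \<Longrightarrow> (\<forall>b. b \<noteq> hd as \<longrightarrow> Ef b as \<noteq> 0)" using Kmain[OF ne] by blast
  ultimately show ?thesis using msq_iff[OF ne] by blast
qed

end

theorem mainTheorem20:
  fixes \<delta> :: "'a::field \<Rightarrow> 'a" and as :: "'a list"
  assumes "derivation \<delta>"
    and "fin_dim_over_constants \<delta>"
    and "as \<noteq> []"
  shows "mult_seq \<delta> as \<longleftrightarrow>
    (\<forall>i. i + 1 < length as \<longrightarrow>
       (\<exists>\<beta>. \<beta> \<noteq> 0 \<and> as ! (i + 1) - as ! i = \<delta> \<beta> * inverse \<beta> \<and> \<beta> \<notin> range \<delta>))"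
proof -
  interpret D0: der0 \<delta> using assms(1) by unfold_locales
  have sub: "subf {c. \<delta> c = 0}"
  proof
    fix x y :: 'a
    assume x: "x \<in> {c. \<delta> c = 0}"
    show "- x \<in> {c. \<delta> c = 0}" using x by (simp add: D0.dneg)
    show "inverse x \<in> {c. \<delta> c = 0}" using x by (cases "x = 0") (auto simp: D0.dinv)
    assume y: "y \<in> {c. \<delta> c = 0}"
    show "x + y \<in> {c. \<delta> c = 0}" using x y by (simp add: D0.dadd)
    show "x * y \<in> {c. \<delta> c = 0}" using x y by (simp add: D0.dmul)
  qed auto
  obtain B where fB: "finite B" and spB: "\<forall>x. \<exists>c. (\<forall>b\<in>B. c b \<in> {c. \<delta> c = 0}) \<and> x = (\<Sum>b\<in>B. c b * b)"
    using assms(2) unfolding fin_dim_over_constants_def by auto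
  have F1: "\<exists>y. y \<noteq> 0 \<and> \<delta> y + c * y = 0" if nw: "\<forall>w. \<delta> w + c * w \<noteq> 1" for c
  proof -
    let ?L = "\<lambda>w. \<delta> w + c * w"
    have la: "\<forall>x y. ?L (x+y) = ?L x + ?L y" by (simp add: D0.dadd algebra_simps)
    have ls: "\<forall>k\<in>{c. \<delta> c = 0}. \<forall>x. ?L (k*x) = k * ?L x" by (simp add: D0.dmul algebra_simps)
    have "inj ?L \<longrightarrow> surj ?L" using subf.lin_main[OF sub fB spB la ls] by blast
    moreover have "\<not> surj ?L"
    proof
      assume s: "surj ?L"
      have "(1::'a) \<in> range ?L" using s by (simp only: UNIV_I)
      then obtain w where w: "1 = ?L w" by (rule imageE)
      have "?L w \<noteq> 1" using nw by (rule spec)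
      then show False using w by simp
    qed
    ultimately have "\<not> inj ?L" by blast
    then obtain x1 x2 where x12: "x1 \<noteq> x2" "?L x1 = ?L x2" unfolding inj_def by blast
    have "\<delta> (x1 - x2) + c * (x1 - x2) = (\<delta> x1 + c * x1) - (\<delta> x2 + c * x2)"
      by (simp add: D0.dminus right_diff_distrib)
    also have "\<dots> = 0" using x12(2) by simp
    finally have "\<delta> (x1 - x2) + c * (x1 - x2) = 0" .
    moreover have "x1 - x2 \<noteq> 0" using x12(1) by simp
    ultimately show ?thesis by blast
  qed
  have F2: "\<exists>k. \<delta> k = 0 \<and> y - k * \<beta> \<in> range \<delta>" if nb: "\<beta> \<notin> range \<delta>" for \<beta> y
  proof -
    have la: "\<forall>x y. \<delta> (x+y) = \<delta> x + \<delta> y" by (simp add: D0.dadd)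
    have ls: "\<forall>k\<in>{c. \<delta> c = 0}. \<forall>x. \<delta> (k*x) = k * \<delta> x" by (simp add: D0.dmul)
    have "\<forall>\<beta> y. \<beta> \<notin> range \<delta> \<longrightarrow> (\<exists>k\<in>{c. \<delta> c = 0}. y - k*\<beta> \<in> range \<delta>)"
      using mp[OF conjunct2[OF subf.lin_main[OF sub fB spB la ls]] refl] .
    then obtain k where "k \<in> {c. \<delta> c = 0}" "y - k*\<beta> \<in> range \<delta>" using nb by blast
    then show ?thesis by blast
  qed
  interpret D: der \<delta> using der.intro[OF D0.der0_axioms der_axioms.intro[OF F1 F2]] .
  show ?thesis using D.main_iff[OF assms(3)] unfolding D.Cond_def D.Lp_def .
qed

end
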